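(* Let $X$ be a polyhedral normed space and $f: X\to X$ nonexpansive and real analytic. If $E\subseteq B_{X^*}$ is a minimal locked set for $f$, then $S_E(f)=x+L_E$ for every $x\in S_E(f)$.
   Context: A polyhedral normed space is a finite-dimensional real normed space whose closed unit ball has finitely many extreme points; $B_{X^*}$ is the closed unit ball of the dual space. Nonexpansive: $\|f(x)-f(y)\|\le\|x-y\|$ for all $x,y$. Real analytic: locally given by a convergent power series. The duality map is $J(x)=\{\phi\in B_{X^*}: \phi(x)=\|x\|\}$. For $E\subseteq B_{X^*}$: $S_E(f)=\{x\in X: \phi(f(x))=\phi(x)\text{ for all }\phi\in E\}$ and $L_E=\{x\in X: \phi(x)=\psi(x)\text{ for all }\phi,\psi\in E\}$. A set $E\subseteq B_{X^*}$ is locked (for $f$) if there exist $v,w\in S_E(f)$ with $J(v-w)=E$; a locked set is minimal if no proper subset of it is locked. *)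

theory Defs
  imports "HOL-Analysis.Analysis"
begin

text \<open>The finite-dimensional real space X is modelled as a type of class euclidean_space
  (used only for its linear and topological structure) equipped with an arbitrary norm N.\<close>

definition is_norm :: "('a::real_vector \<Rightarrow> real) \<Rightarrow> bool" where
  "is_norm N \<longleftrightarrow> (\<forall>x. N x = 0 \<longleftrightarrow> x = 0) \<and> (\<forall>x y. N (x + y) \<le> N x + N y)
     \<and> (\<forall>c x. N (c *\<^sub>R x) = \<bar>c\<bar> * N x)"

definition polyhedral_norm :: "('a::euclidean_space \<Rightarrow> real) \<Rightarrow> bool" where
  "polyhedral_norm N \<longleftrightarrow> is_norm N \<and> finite {x. x extreme_point_of {y. N y \<le> 1}}"

definition dual_ball :: "('a::euclidean_space \<Rightarrow> real) \<Rightarrow> ('a \<Rightarrow> real) set" where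
  "dual_ball N = {\<phi>. linear \<phi> \<and> (\<forall>x. \<bar>\<phi> x\<bar> \<le> N x)}"

definition nonexpansive :: "('a::euclidean_space \<Rightarrow> real) \<Rightarrow> ('a \<Rightarrow> 'a) \<Rightarrow> bool" where
  "nonexpansive N f \<longleftrightarrow> (\<forall>x y. N (f x - f y) \<le> N (x - y))"

definition real_analytic_on :: "('a::euclidean_space \<Rightarrow> 'b::real_normed_vector) \<Rightarrow> 'a set \<Rightarrow> bool" where
  "real_analytic_on f S \<longleftrightarrow> (\<forall>x0\<in>S. \<exists>r>0. \<exists>c::('a \<Rightarrow> nat) \<Rightarrow> 'b. \<forall>y\<in>ball x0 r.
      ((\<lambda>\<alpha>. (\<Prod>b\<in>Basis. ((y - x0) \<bullet> b) ^ \<alpha> b) *\<^sub>R c \<alpha>) has_sum f y)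
        {\<alpha>. \<forall>i. i \<notin> Basis \<longrightarrow> \<alpha> i = 0})"

definition duality_map :: "('a::euclidean_space \<Rightarrow> real) \<Rightarrow> 'a \<Rightarrow> ('a \<Rightarrow> real) set" where
  "duality_map N x = {\<phi> \<in> dual_ball N. \<phi> x = N x}"

definition S_set :: "('a \<Rightarrow> real) set \<Rightarrow> ('a \<Rightarrow> 'a) \<Rightarrow> 'a set" where
  "S_set E f = {x. \<forall>\<phi>\<in>E. \<phi> (f x) = \<phi> x}"

definition L_set :: "('a \<Rightarrow> real) set \<Rightarrow> 'a set" where
  "L_set E = {x. \<forall>\<phi>\<in>E. \<forall>\<psi>\<in>E. \<phi> x = \<psi> x}"

definition locked :: "('a::euclidean_space \<Rightarrow> real) \<Rightarrow> ('a \<Rightarrow> 'a) \<Rightarrow> ('a \<Rightarrow> real) set \<Rightarrow> bool" where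
  "locked N f E \<longleftrightarrow> E \<subseteq> dual_ball N \<and>
     (\<exists>v w. v \<in> S_set E f \<and> w \<in> S_set E f \<and> duality_map N (v - w) = E)"

definition minimal_locked :: "('a::euclidean_space \<Rightarrow> real) \<Rightarrow> ('a \<Rightarrow> 'a) \<Rightarrow> ('a \<Rightarrow> real) set \<Rightarrow> bool" where
  "minimal_locked N f E \<longleftrightarrow> locked N f E \<and> (\<forall>E'. E' \<subset> E \<longrightarrow> \<not> locked N f E')"

end

theory Submission
  imports Defs "HOL-Complex_Analysis.Conformal_Mappings"
begin


lemma normD:
  assumes "is_norm N"
  shows "N 0 = 0" "\<And>x. N (-x) = N x" "\<And>x. N x \<ge> 0" "\<And>x y. N (x + y) \<le> N x + N y"
    "\<And>c x. N (c *\<^sub>R x) = \<bar>c\<bar> * N x" "\<And>x. N x = 0 \<longleftrightarrow> x = 0"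
    "\<And>x y. N (x - y) = N (y - x)"
proof -
  have h: "\<And>c x. N (c *\<^sub>R x) = \<bar>c\<bar> * N x" and t: "\<And>x y. N (x + y) \<le> N x + N y"
    and z: "\<And>x. N x = 0 \<longleftrightarrow> x = 0" using assms unfolding is_norm_def by auto
  show "N 0 = 0" using z by simp
  show m: "\<And>x. N (-x) = N x" using h[of "-1"] by simp
  show "\<And>x. N x \<ge> 0"
  proof -
    fix x have "N (x + -x) \<le> N x + N (-x)" by (rule t)
    moreover have "N 0 = 0" using z by simp
    ultimately show "N x \<ge> 0" using m by simp
  qed
  show "\<And>x y. N (x + y) \<le> N x + N y" by (rule t)
  show "\<And>c x. N (c *\<^sub>R x) = \<bar>c\<bar> * N x" by (rule h)
  show "\<And>x. N x = 0 \<longleftrightarrow> x = 0" by (rule z)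
  show "\<And>x y. N (x - y) = N (y - x)" using m by (metis minus_diff_eq)
qed

lemma norm_sum_le:
  assumes "is_norm N" "finite A"
  shows "N (sum g A) \<le> (\<Sum>a\<in>A. N (g a))"
  using assms(2)
proof induction
  case empty then show ?case using normD(1)[OF assms(1)] by simp
next
  case (insert a A)
  then show ?case using normD(4)[OF assms(1), of "g a" "sum g A"] by simp
qed

lemma norm_upper:
  fixes N :: "'a::euclidean_space \<Rightarrow> real"
  assumes "is_norm N"
  shows "\<exists>C>0. \<forall>x. N x \<le> C * norm x"
proof -
  define C where "C = (\<Sum>b\<in>Basis. N b) + 1"
  have Cpos: "C > 0" unfolding C_def using normD(3)[OF assms] by (simp add: sum_nonneg add_nonneg_pos)
  have "N x \<le> C * norm x" for x
  proof -
    have "N x = N (\<Sum>b\<in>Basis. (x \<bullet> b) *\<^sub>R b)" by (simp add: euclidean_representation)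
    also have "\<dots> \<le> (\<Sum>b\<in>Basis. N ((x \<bullet> b) *\<^sub>R b))" by (rule norm_sum_le[OF assms]) simp
    also have "\<dots> = (\<Sum>b\<in>Basis. \<bar>x \<bullet> b\<bar> * N b)" using normD(5)[OF assms] by simp
    also have "\<dots> \<le> (\<Sum>b\<in>Basis. norm x * N b)"
      by (rule sum_mono) (simp add: Basis_le_norm mult_right_mono normD(3)[OF assms])
    also have "\<dots> = norm x * (\<Sum>b\<in>Basis. N b)" by (simp add: sum_distrib_left)
    also have "\<dots> \<le> C * norm x" unfolding C_def by (simp add: algebra_simps)
    finally show ?thesis .
  qed
  then show ?thesis using Cpos by blast
qed

lemma norm_cont:
  fixes N :: "'a::euclidean_space \<Rightarrow> real"
  assumes "is_norm N"
  shows "continuous_on S N"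
proof -
  obtain C where C: "C > 0" "\<And>x. N x \<le> C * norm x" using norm_upper[OF assms] by blast
  have "\<bar>N x - N y\<bar> \<le> C * dist x y" for x y
  proof -
    have "N x \<le> N y + N (x - y)" using normD(4)[OF assms, of y "x - y"] by simp
    moreover have "N y \<le> N x + N (y - x)" using normD(4)[OF assms, of x "y - x"] by simp
    moreover have "N (x - y) \<le> C * dist x y" using C(2) by (simp add: dist_norm)
    moreover have "N (y - x) \<le> C * dist x y" using C(2)[of "y - x"] by (simp add: dist_norm norm_minus_commute)
    ultimately show ?thesis by linarith
  qed
  then show ?thesis
  proof -
    have "C-lipschitz_on S N"
      by (rule lipschitz_onI) (use C(1) \<open>\<And>x y. \<bar>N x - N y\<bar> \<le> C * dist x y\<close> in \<open>auto simp: dist_real_def\<close>)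
    then show ?thesis by (rule lipschitz_on_continuous_on)
  qed
qed

lemma norm_lower:
  fixes N :: "'a::euclidean_space \<Rightarrow> real"
  assumes "is_norm N"
  shows "\<exists>m>0. \<forall>x. m * norm x \<le> N x"
proof -
  obtain b :: 'a where b: "b \<in> Basis" using nonempty_Basis by blast
  have ne: "sphere (0::'a) 1 \<noteq> {}" using b by (auto intro!: exI[of _ b])
  obtain x0 where x0: "x0 \<in> sphere 0 1" "\<And>y. y \<in> sphere 0 1 \<Longrightarrow> N x0 \<le> N y"
    using continuous_attains_inf[OF compact_sphere ne norm_cont[OF assms]] by blast
  have m: "N x0 > 0" using x0(1) normD(3,6)[OF assms, of x0] by fastforce
  have "N x0 * norm x \<le> N x" for x
  proof (cases "x = 0")
    case True then show ?thesis using normD(1)[OF assms] by simp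
  next
    case False
    have "N x0 \<le> N ((1 / norm x) *\<^sub>R x)" using x0(2) False by simp
    also have "\<dots> = N x / norm x" using normD(5)[OF assms] by simp
    finally show ?thesis using False by (simp add: field_simps)
  qed
  then show ?thesis using m by blast
qed

lemma poly_rep:
  fixes N :: "'a::euclidean_space \<Rightarrow> real"
  assumes P: "polyhedral_norm N"
  shows "\<exists>\<Psi>. finite \<Psi> \<and> \<Psi> \<noteq> {} \<and> \<Psi> \<subseteq> dual_ball N \<and> (\<forall>x. \<exists>\<psi>\<in>\<Psi>. \<psi> x = N x)"
proof -
  have nN: "is_norm N" and fin: "finite {x. x extreme_point_of {y. N y \<le> 1}}"
    using P unfolding polyhedral_norm_def by auto
  note nd = normD[OF nN]
  obtain C where C: "C > 0" "\<And>x. N x \<le> C * norm x" using norm_upper[OF nN] by blast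
  obtain m where m: "m > 0" "\<And>x. m * norm x \<le> N x" using norm_lower[OF nN] by blast
  define B where "B = {y. N y \<le> 1}"
  have "closed B" unfolding B_def
    by (rule closed_Collect_le[OF norm_cont[OF nN] continuous_on_const])
  moreover have "bounded B"
  proof -
    have "B \<subseteq> cball 0 (1/m)" unfolding B_def
    proof
      fix y assume "y \<in> {y. N y \<le> 1}"
      then have "m * norm y \<le> 1" using m(2)[of y] by simp
      then show "y \<in> cball 0 (1/m)" using m(1) by (simp add: field_simps)
    qed
    then show ?thesis using bounded_cball bounded_subset by blast
  qed
  ultimately have cB: "compact B" using compact_eq_bounded_closed by blast
  have cvB: "convex B" unfolding convex_def B_def
  proof (clarsimp)
    fix x y :: 'a and u v :: real assume "N x \<le> 1" "N y \<le> 1" "0 \<le> u" "0 \<le> v" "u + v = 1"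
    have "N (u *\<^sub>R x + v *\<^sub>R y) \<le> u * N x + v * N y"
      using nd(4)[of "u *\<^sub>R x" "v *\<^sub>R y"] nd(5) \<open>0 \<le> u\<close> \<open>0 \<le> v\<close> by simp
    also have "\<dots> \<le> u * 1 + v * 1"
      using \<open>N x \<le> 1\<close> \<open>N y \<le> 1\<close> \<open>0 \<le> u\<close> \<open>0 \<le> v\<close> by (intro add_mono mult_left_mono) auto
    finally show "N (u *\<^sub>R x + v *\<^sub>R y) \<le> 1" using \<open>u + v = 1\<close> by simp
  qed
  have "B = convex hull {x. x extreme_point_of B}" by (rule Krein_Milman_Minkowski[OF cB cvB])
  then have "polytope B" unfolding polytope_def using fin B_def by blast
  then have "polyhedron B" by (rule polytope_imp_polyhedron)
  then obtain F where F: "finite F" "B = \<Inter>F" "\<forall>h\<in>F. \<exists>a b. a \<noteq> 0 \<and> h = {x. a \<bullet> x \<le> b}"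
    unfolding polyhedron_def by blast
  then obtain a bb where ab: "\<And>h. h \<in> F \<Longrightarrow> a h \<noteq> 0 \<and> h = {x. a h \<bullet> x \<le> bb h}"
    by metis
  have Fne: "F \<noteq> {}"
  proof
    assume "F = {}"
    then have "B = UNIV" using F(2) by simp
    then show False using \<open>bounded B\<close> not_bounded_UNIV by metis
  qed
  have bpos: "bb h > 0" if h: "h \<in> F" for h
  proof (rule ccontr)
    assume nb: "\<not> bb h > 0"
    define x where "x = (1 / (C * norm (a h))) *\<^sub>R a h"
    have an: "norm (a h) > 0" using ab[OF h] by simp
    have "norm x = 1 / C" unfolding x_def using an C(1) by simp
    then have "N x \<le> 1" using C(2)[of x] C(1) by simp
    then have "x \<in> B" unfolding B_def by simp
    then have "x \<in> h" using F(2) h by blast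
    then have "a h \<bullet> x \<le> bb h" using ab[OF h] by blast
    moreover have "a h \<bullet> x = norm (a h) / C"
      unfolding x_def using an C(1) by (simp add: power2_norm_eq_inner[symmetric] power2_eq_square)
    moreover have "norm (a h) / C > 0" using an C(1) by simp
    ultimately show False using nb by linarith
  qed
  define ps where "ps h = (\<lambda>x. (a h \<bullet> x) / bb h)" for h
  have le: "ps h x \<le> N x" if h: "h \<in> F" for h x
  proof (cases "x = 0")
    case True then show ?thesis using nd(1) by (simp add: ps_def)
  next
    case False
    then have Nx: "N x > 0" using nd(3,6) by (metis less_eq_real_def)
    define y where "y = (1 / N x) *\<^sub>R x"
    have "N y = 1" unfolding y_def using nd(5) Nx by simp
    then have "y \<in> B" unfolding B_def by simp
    then have "y \<in> h" using F(2) h by blast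
    then have "a h \<bullet> y \<le> bb h" using ab[OF h] by blast
    then have "(a h \<bullet> x) / N x \<le> bb h" unfolding y_def by (simp add: inner_scaleR_right)
    then have "a h \<bullet> x \<le> bb h * N x" using Nx by (simp add: field_simps)
    then show ?thesis unfolding ps_def using bpos[OF h] by (simp add: field_simps mult.commute)
  qed
  have ex: "\<exists>h\<in>F. ps h x \<ge> N x" for x
  proof (rule ccontr)
    assume "\<not> (\<exists>h\<in>F. ps h x \<ge> N x)"
    then have lt: "\<And>h. h \<in> F \<Longrightarrow> ps h x < N x" by force
    have Nx: "N x > 0"
    proof -
      obtain h where "h \<in> F" using Fne by blast
      then have "ps h x < N x" by (rule lt)
      then show ?thesis using le[OF \<open>h \<in> F\<close>, of x] nd(3)[of x]
        by (cases "x = 0") (auto simp: ps_def nd(1) less_le nd(6))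
    qed
    define s where "s = Max (insert (N x / 2) ((\<lambda>h. ps h x) ` F))"
    have sfin: "finite (insert (N x / 2) ((\<lambda>h. ps h x) ` F))" using F(1) by simp
    have s1: "s < N x" unfolding s_def using sfin lt Nx by (subst Max_less_iff) auto
    have s2: "s \<ge> N x / 2" unfolding s_def using sfin by (intro Max_ge) auto
    have s3: "ps h x \<le> s" if "h \<in> F" for h unfolding s_def using sfin that by (intro Max_ge) auto
    have spos: "s > 0" using s2 Nx by linarith
    define y where "y = (1 / s) *\<^sub>R x"
    have "y \<in> h" if h: "h \<in> F" for h
    proof -
      have "(a h \<bullet> x) / bb h \<le> s" using s3[OF h] by (simp add: ps_def)
      then have "a h \<bullet> x \<le> s * bb h" using bpos[OF h] by (simp add: field_simps)
      then have "a h \<bullet> y \<le> bb h" unfolding y_def using spos by (simp add: inner_scaleR_right field_simps)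
      then show ?thesis using ab[OF h] by blast
    qed
    then have "y \<in> B" using F(2) by blast
    then have "N y \<le> 1" unfolding B_def by simp
    moreover have "N y = N x / s" unfolding y_def using nd(5) spos by simp
    ultimately show False using s1 spos by (simp add: field_simps)
  qed
  have lin: "linear (ps h)" for h
    unfolding ps_def by (rule linearI) (auto simp: inner_add_right inner_scaleR_right add_divide_distrib)
  have db: "ps h \<in> dual_ball N" if h: "h \<in> F" for h
  proof -
    have "\<bar>ps h x\<bar> \<le> N x" for x
    proof -
      have "ps h (-x) = - ps h x" using linear_neg[OF lin] by simp
      then show ?thesis using le[OF h, of x] le[OF h, of "-x"] nd(2)[of x] by linarith
    qed
    then show ?thesis unfolding dual_ball_def using lin by blast
  qed
  show ?thesis
  proof (intro exI[of _ "ps ` F"] conjI)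
    show "finite (ps ` F)" using F(1) by simp
    show "ps ` F \<noteq> {}" using Fne by simp
    show "ps ` F \<subseteq> dual_ball N" using db by blast
    show "\<forall>x. \<exists>\<psi>\<in>ps ` F. \<psi> x = N x"
    proof
      fix x obtain h where "h \<in> F" "ps h x \<ge> N x" using ex by blast
      then show "\<exists>\<psi>\<in>ps ` F. \<psi> x = N x" using le[of h x] by (intro bexI[of _ "ps h"]) auto
    qed
  qed
qed




lemma dbD: assumes "\<phi> \<in> dual_ball N" shows "linear \<phi>" "\<phi> x \<le> N x" "\<bar>\<phi> x\<bar> \<le> N x"
  using assms unfolding dual_ball_def by (auto simp: abs_le_iff)

lemma J_scale:
  assumes "is_norm N" "a > 0"
  shows "duality_map N (a *\<^sub>R y) = duality_map N y"
proof -
  have "\<phi> (a *\<^sub>R y) = N (a *\<^sub>R y) \<longleftrightarrow> \<phi> y = N y" if "\<phi> \<in> dual_ball N" for \<phi>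
    using linear_scale[OF dbD(1)[OF that]] normD(5)[OF assms(1)] assms(2) by simp
  then show ?thesis unfolding duality_map_def by blast
qed

lemma L_scale:
  assumes "E \<subseteq> dual_ball N" "h \<in> L_set E"
  shows "c *\<^sub>R h \<in> L_set E"
  unfolding L_set_def
proof (clarify)
  fix \<phi> \<psi> assume a: "\<phi> \<in> E" "\<psi> \<in> E"
  then have "linear \<phi>" "linear \<psi>" using assms(1) dbD(1) by auto
  then show "\<phi> (c *\<^sub>R h) = \<psi> (c *\<^sub>R h)" using assms(2) a unfolding L_set_def by (simp add: linear_scale)
qed

lemma L_add:
  assumes "E \<subseteq> dual_ball N" "h \<in> L_set E" "k \<in> L_set E"
  shows "h + k \<in> L_set E"
  unfolding L_set_def
proof (clarify)
  fix \<phi> \<psi> assume a: "\<phi> \<in> E" "\<psi> \<in> E"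
  then have "linear \<phi>" "linear \<psi>" using assms(1) dbD(1) by auto
  then show "\<phi> (h + k) = \<psi> (h + k)" using assms(2,3) a unfolding L_set_def by (simp add: linear_add) metis
qed

lemma L_diff:
  assumes "E \<subseteq> dual_ball N" "h \<in> L_set E" "k \<in> L_set E"
  shows "h - k \<in> L_set E"
  unfolding L_set_def
proof (clarify)
  fix \<phi> \<psi> assume a: "\<phi> \<in> E" "\<psi> \<in> E"
  then have "linear \<phi>" "linear \<psi>" using assms(1) dbD(1) by auto
  then show "\<phi> (h - k) = \<psi> (h - k)" using assms(2,3) a unfolding L_set_def by (simp add: linear_diff) metis
qed

lemma gap:
  fixes \<Psi> :: "('a::euclidean_space \<Rightarrow> real) set"
  assumes "finite \<Psi>" "\<Psi> \<subseteq> dual_ball N"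
  shows "\<exists>g>0. \<forall>\<psi>\<in>\<Psi>. \<psi> u \<noteq> N u \<longrightarrow> \<psi> u \<le> N u - g"
proof -
  define G where "G = (\<lambda>\<psi>. N u - \<psi> u) ` {\<psi>\<in>\<Psi>. \<psi> u \<noteq> N u}"
  define g where "g = Min (insert 1 G)"
  have fG: "finite (insert 1 G)" using assms(1) unfolding G_def by simp
  have "g > 0" unfolding g_def using fG
  proof (subst Min_gr_iff)
    show "\<forall>a\<in>insert 1 G. 0 < a" unfolding G_def using assms(2) dbD(2)
      by (force simp: less_le)
  qed auto
  moreover have "\<psi> u \<le> N u - g" if "\<psi> \<in> \<Psi>" "\<psi> u \<noteq> N u" for \<psi>
  proof -
    have "g \<le> N u - \<psi> u" unfolding g_def using fG that by (intro Min_le) (auto simp: G_def)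
    then show ?thesis by simp
  qed
  ultimately show ?thesis by blast
qed

locale polyN =
  fixes N :: "'a::euclidean_space \<Rightarrow> real" and \<Psi> :: "('a \<Rightarrow> real) set"
  assumes nN: "is_norm N" and finP: "finite \<Psi>" and PD: "\<Psi> \<subseteq> dual_ball N"
    and rep: "\<And>x. \<exists>\<psi>\<in>\<Psi>. \<psi> x = N x"
begin

lemma JD: "\<phi> \<in> duality_map N y \<Longrightarrow> \<phi> \<in> dual_ball N \<and> \<phi> y = N y"
  unfolding duality_map_def by auto

lemma J_sub: "duality_map N y \<subseteq> dual_ball N" unfolding duality_map_def by auto

lemma local_flat:
  "\<exists>\<delta>>0. \<forall>h\<in>L_set (duality_map N u). norm h < \<delta> \<longrightarrow> duality_map N u \<subseteq> duality_map N (u + h)"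
proof -
  obtain g where g: "g > 0" "\<And>\<psi>. \<psi> \<in> \<Psi> \<Longrightarrow> \<psi> u \<noteq> N u \<Longrightarrow> \<psi> u \<le> N u - g"
    using gap[OF finP PD, of u] by blast
  obtain C where C: "C > 0" "\<And>x. N x \<le> C * norm x" using norm_upper[OF nN] by blast
  define \<delta> where "\<delta> = g / (2 * C)"
  have dpos: "\<delta> > 0" unfolding \<delta>_def using g C by simp
  have "duality_map N u \<subseteq> duality_map N (u + h)"
    if h: "h \<in> L_set (duality_map N u)" "norm h < \<delta>" for h
  proof -
    have Nh: "N h < g / 2"
    proof -
      have "N h \<le> C * norm h" by (rule C(2))
      also have "\<dots> < C * \<delta>" using h(2) C(1) by simp
      also have "\<dots> = g / 2" unfolding \<delta>_def using C(1) by simp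
      finally show ?thesis .
    qed
    obtain \<psi>0 where p0: "\<psi>0 \<in> \<Psi>" "\<psi>0 (u + h) = N (u + h)" using rep by blast
    obtain \<psi>1 where p1: "\<psi>1 \<in> \<Psi>" "\<psi>1 u = N u" using rep by blast
    have l0: "linear \<psi>0" "linear \<psi>1" using p0(1) p1(1) PD dbD(1) by auto
    have "\<psi>0 u = N u"
    proof (rule ccontr)
      assume ne: "\<psi>0 u \<noteq> N u"
      have "\<psi>0 (u + h) = \<psi>0 u + \<psi>0 h" using linear_add[OF l0(1)] by simp
      also have "\<dots> \<le> N u - g + N h" using g(2)[OF p0(1) ne] dbD(2)[of \<psi>0 N h] p0(1) PD by force
      finally have a: "N (u + h) \<le> N u - g + N h" using p0(2) by simp
      have "\<psi>1 (u + h) = N u + \<psi>1 h" using linear_add[OF l0(2)] p1(2) by simp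
      moreover have "\<psi>1 (u + h) \<le> N (u + h)" using dbD(2) p1(1) PD by blast
      moreover have "\<bar>\<psi>1 h\<bar> \<le> N h" using dbD(3) p1(1) PD by blast
      ultimately show False using a Nh by linarith
    qed
    then have J0: "\<psi>0 \<in> duality_map N u" using p0(1) PD unfolding duality_map_def by blast
    show ?thesis
    proof
      fix \<phi> assume ph: "\<phi> \<in> duality_map N u"
      have "\<phi> h = \<psi>0 h" using h(1) ph J0 unfolding L_set_def by blast
      moreover have "linear \<phi>" using JD[OF ph] dbD(1) by blast
      ultimately have "\<phi> (u + h) = \<psi>0 (u + h)"
        using JD[OF ph] \<open>\<psi>0 u = N u\<close> linear_add[OF l0(1)] by (simp add: linear_add)
      then show "\<phi> \<in> duality_map N (u + h)" using JD[OF ph] p0(2) unfolding duality_map_def by simp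
    qed
  qed
  then show ?thesis using dpos by blast
qed

lemma local_flat_scaled:
  obtains \<delta> where "\<delta> > 0" "\<And>h a. h \<in> L_set (duality_map N u) \<Longrightarrow> a > 0 \<Longrightarrow> norm h < a * \<delta>
     \<Longrightarrow> duality_map N u \<subseteq> duality_map N (a *\<^sub>R u + h)"
proof -
  obtain \<delta> where d: "\<delta> > 0" "\<And>h. h\<in>L_set (duality_map N u) \<Longrightarrow> norm h < \<delta> \<Longrightarrow>
      duality_map N u \<subseteq> duality_map N (u + h)" using local_flat[of u] by blast
  have "duality_map N u \<subseteq> duality_map N (a *\<^sub>R u + h)"
    if "h \<in> L_set (duality_map N u)" "a > 0" "norm h < a * \<delta>" for h a
  proof -
    have "(1/a) *\<^sub>R h \<in> L_set (duality_map N u)" by (rule L_scale[OF J_sub that(1)])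
    moreover have "norm ((1/a) *\<^sub>R h) < \<delta>" using that(2,3) by (simp add: field_simps)
    ultimately have "duality_map N u \<subseteq> duality_map N (u + (1/a) *\<^sub>R h)" using d(2) by blast
    also have "duality_map N (u + (1/a) *\<^sub>R h) = duality_map N (a *\<^sub>R (u + (1/a) *\<^sub>R h))"
      using J_scale[OF nN that(2)] by simp
    also have "a *\<^sub>R (u + (1/a) *\<^sub>R h) = a *\<^sub>R u + h" using that(2) by (simp add: scaleR_add_right)
    finally show ?thesis .
  qed
  then show ?thesis using that d(1) by blast
qed

lemma far:
  "\<exists>t. duality_map N (t *\<^sub>R u + d) \<subseteq> duality_map N u \<and>
     (d \<notin> L_set (duality_map N u) \<longrightarrow> duality_map N (t *\<^sub>R u + d) \<noteq> duality_map N u)"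
proof -
  obtain g where g: "g > 0" "\<And>\<psi>. \<psi> \<in> \<Psi> \<Longrightarrow> \<psi> u \<noteq> N u \<Longrightarrow> \<psi> u \<le> N u - g"
    using gap[OF finP PD, of u] by blast
  define A where "A = {\<psi>\<in>\<Psi>. \<psi> u = N u}"
  have fA: "finite A" "A \<noteq> {}" unfolding A_def using finP rep[of u] by auto
  define M where "M = Max ((\<lambda>\<psi>. \<psi> d) ` A)"
  have "M \<in> (\<lambda>\<psi>. \<psi> d) ` A" unfolding M_def using fA by (intro Max_in) auto
  then obtain \<psi>m where pm1: "\<psi>m \<in> A" "\<psi>m d = M" by blast
  have pm2: "\<psi> d \<le> M" if "\<psi> \<in> A" for \<psi> unfolding M_def using fA that by (intro Max_ge) auto
  have pmD: "\<psi>m \<in> dual_ball N" "\<psi>m u = N u" using pm1 PD unfolding A_def by auto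
  define t where "t = 2 * N d / g + 2"
  have Nd: "N d \<ge> 0" using normD(3)[OF nN] by simp
  have key: "N (t' *\<^sub>R u + d) = t' * N u + M" if t': "t' \<ge> t - 1" for t'
  proof -
    have tp: "t' * g > 2 * N d"
    proof -
      have "t' \<ge> 2 * N d / g + 1" using t' unfolding t_def by simp
      then have "t' * g \<ge> (2 * N d / g + 1) * g" using g(1) by (simp add: mult_right_mono)
      also have "(2 * N d / g + 1) * g = 2 * N d + g" using g(1) by (simp add: field_simps)
      finally show ?thesis using g(1) by simp
    qed
    have t'pos: "t' > 0" using tp Nd g(1) by (smt (verit) mult_nonpos_nonneg)
    have lm: "linear \<psi>m" using dbD(1)[OF pmD(1)] .
    have ge: "t' * N u + M \<le> N (t' *\<^sub>R u + d)"
    proof -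
      have "\<psi>m (t' *\<^sub>R u + d) = t' * N u + M" using pm1(2) pmD(2) linear_add[OF lm] linear_scale[OF lm] by simp
      then show ?thesis using dbD(2)[OF pmD(1)] by metis
    qed
    obtain \<psi>0 where p0: "\<psi>0 \<in> \<Psi>" "\<psi>0 (t' *\<^sub>R u + d) = N (t' *\<^sub>R u + d)" using rep by blast
    have p0D: "\<psi>0 \<in> dual_ball N" using p0(1) PD by blast
    have l0: "linear \<psi>0" using dbD(1)[OF p0D] .
    have ev: "\<psi>0 (t' *\<^sub>R u + d) = t' * \<psi>0 u + \<psi>0 d" using linear_add[OF l0] linear_scale[OF l0] by simp
    have "N (t' *\<^sub>R u + d) \<le> t' * N u + M"
    proof (cases "\<psi>0 u = N u")
      case True
      then have "\<psi>0 d \<le> M" using pm2 p0(1) unfolding A_def by blast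
      then show ?thesis using p0(2) ev True by simp
    next
      case False
      have "\<psi>0 u \<le> N u - g" by (rule g(2)[OF p0(1) False])
      then have "t' * \<psi>0 u \<le> t' * (N u - g)" using t'pos by (simp add: mult_left_mono)
      moreover have "\<psi>0 d \<le> N d" using dbD(2)[OF p0D] .
      moreover have "-N d \<le> M" using dbD(3)[OF pmD(1), of d] pm1(2) by linarith
      ultimately show ?thesis using p0(2) ev tp by (simp add: algebra_simps)
    qed
    then show ?thesis using ge by linarith
  qed
  have sub: "duality_map N (t *\<^sub>R u + d) \<subseteq> duality_map N u"
  proof
    fix \<phi> assume ph: "\<phi> \<in> duality_map N (t *\<^sub>R u + d)"
    have phD: "\<phi> \<in> dual_ball N" "\<phi> (t *\<^sub>R u + d) = N (t *\<^sub>R u + d)" using JD[OF ph] by auto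
    have l: "linear \<phi>" using dbD(1)[OF phD(1)] .
    have e: "\<phi> (s *\<^sub>R u + d) = s * \<phi> u + \<phi> d" for s using linear_add[OF l] linear_scale[OF l] by simp
    have "\<phi> ((t + 1) *\<^sub>R u + d) \<le> N ((t + 1) *\<^sub>R u + d)" using dbD(2)[OF phD(1)] .
    moreover have "\<phi> ((t - 1) *\<^sub>R u + d) \<le> N ((t - 1) *\<^sub>R u + d)" using dbD(2)[OF phD(1)] .
    moreover have "N ((t + 1) *\<^sub>R u + d) = (t + 1) * N u + M" by (rule key) simp
    moreover have "N ((t - 1) *\<^sub>R u + d) = (t - 1) * N u + M" by (rule key) simp
    moreover have "N (t *\<^sub>R u + d) = t * N u + M" by (rule key) simp
    ultimately have "\<phi> u = N u" using phD(2) e[of "t+1"] e[of "t-1"] e[of t] by (simp add: algebra_simps)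
    then show "\<phi> \<in> duality_map N u" using phD(1) unfolding duality_map_def by blast
  qed
  have neq: "duality_map N (t *\<^sub>R u + d) \<noteq> duality_map N u" if nd: "d \<notin> L_set (duality_map N u)"
  proof -
    obtain \<phi>1 \<phi>2 where ph: "\<phi>1 \<in> duality_map N u" "\<phi>2 \<in> duality_map N u" "\<phi>1 d < \<phi>2 d"
    proof -
      obtain a b where "a \<in> duality_map N u" "b \<in> duality_map N u" "a d \<noteq> b d"
        using nd unfolding L_set_def by blast
      then show ?thesis using that by (cases "a d < b d") auto
    qed
    have D1: "\<phi>1 \<in> dual_ball N" "\<phi>1 u = N u" and D2: "\<phi>2 \<in> dual_ball N" "\<phi>2 u = N u"
      using JD[OF ph(1)] JD[OF ph(2)] by auto
    have l1: "linear \<phi>1" and l2: "linear \<phi>2" using dbD(1) D1(1) D2(1) by auto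
    have "\<phi>1 (t *\<^sub>R u + d) < \<phi>2 (t *\<^sub>R u + d)"
      using linear_add[OF l1] linear_scale[OF l1] linear_add[OF l2] linear_scale[OF l2] D1(2) D2(2) ph(3) by simp
    also have "\<dots> \<le> N (t *\<^sub>R u + d)" using dbD(2)[OF D2(1)] .
    finally have "\<phi>1 \<notin> duality_map N (t *\<^sub>R u + d)" unfolding duality_map_def by auto
    then show ?thesis using ph(1) by blast
  qed
  show ?thesis using sub neq by blast
qed

end



lemma powser_zero_near:
  fixes a :: "nat \<Rightarrow> real" and h :: "real \<Rightarrow> real"
  assumes rho: "\<rho> > 0" and ser: "\<And>\<tau>. \<bar>\<tau>\<bar> < \<rho> \<Longrightarrow> (\<lambda>n. a n * \<tau>^n) sums h (r + \<tau>)"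
    and r1: "\<bar>r1 - r\<bar> < \<rho>" "\<epsilon>1 > 0" and z: "\<And>s. \<bar>s - r1\<bar> < \<epsilon>1 \<Longrightarrow> h s = 0"
    and tau: "\<bar>\<tau>\<bar> < \<rho>"
  shows "h (r + \<tau>) = 0"
proof -
  define c where "c n = complex_of_real (a n)" for n
  define F where "F = Abs_fps c"
  have sc: "(\<lambda>n. c n * (of_real t)^n) sums of_real (h (r + t))" if "\<bar>t\<bar> < \<rho>" for t
  proof -
    have "(\<lambda>n. complex_of_real (a n * t^n)) sums of_real (h (r + t))"
      using ser[OF that] by (rule sums_of_real)
    then show ?thesis by (simp add: c_def)
  qed
  have cr: "conv_radius c \<ge> ereal \<rho>"
  proof (rule conv_radius_geI_ex')
    fix t assume "0 < t" "ereal t < ereal \<rho>"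
    then have "\<bar>t\<bar> < \<rho>" by simp
    then show "summable (\<lambda>n. c n * of_real t ^ n)" using sc sums_summable by blast
  qed
  have hol: "eval_fps F holomorphic_on ball 0 \<rho>"
  proof (rule holomorphic_on_eval_fps)
    show "ball 0 \<rho> \<subseteq> eball 0 (fps_conv_radius F)"
      using ball_eball_mono[OF cr] unfolding F_def fps_conv_radius_def by simp
  qed
  have ev: "eval_fps F (of_real t) = of_real (h (r + t))" if "\<bar>t\<bar> < \<rho>" for t
    unfolding eval_fps_def F_def using sums_unique[OF sc[OF that]] by simp
  define \<epsilon> where "\<epsilon> = min \<epsilon>1 (\<rho> - \<bar>r1 - r\<bar>)"
  have ep: "\<epsilon> > 0" unfolding \<epsilon>_def using r1 by simp
  define U where "U = complex_of_real ` {t. \<bar>t - (r1 - r)\<bar> < \<epsilon>}"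
  have "eval_fps F (of_real \<tau>) = 0"
  proof (rule analytic_continuation[OF hol])
    show "open (ball (0::complex) \<rho>)" "connected (ball (0::complex) \<rho>)" by auto
    show "U \<subseteq> ball 0 \<rho>" unfolding U_def \<epsilon>_def by (auto simp: dist_norm)
    show "complex_of_real (r1 - r) \<in> ball 0 \<rho>" using r1 by (simp add: dist_norm flip: of_real_diff)
    show "complex_of_real \<tau> \<in> ball 0 \<rho>" using tau by (simp add: dist_norm)
    show "complex_of_real (r1 - r) islimpt U"
    proof (subst islimpt_approachable, intro allI impI)
      fix e :: real assume "e > 0"
      define x where "x = complex_of_real (r1 - r + min e \<epsilon> / 2)"
      have "x \<in> U" unfolding x_def U_def using ep \<open>e > 0\<close> by (intro imageI) auto
      moreover have "x \<noteq> complex_of_real (r1 - r)" unfolding x_def using ep \<open>e > 0\<close> by simp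
      moreover have "dist x (complex_of_real (r1 - r)) < e" unfolding x_def using ep \<open>e > 0\<close>
        by (simp add: dist_norm flip: of_real_diff)
      ultimately show "\<exists>x'\<in>U. x' \<noteq> complex_of_real (r1 - r) \<and> dist x' (complex_of_real (r1 - r)) < e"
        by blast
    qed
    show "eval_fps F z = 0" if "z \<in> U" for z
    proof -
      obtain t where t: "z = of_real t" "\<bar>t - (r1 - r)\<bar> < \<epsilon>" using \<open>z \<in> U\<close> unfolding U_def by blast
      have "\<bar>t\<bar> < \<rho>" using t(2) unfolding \<epsilon>_def by linarith
      moreover have "h (r + t) = 0" using z[of "r + t"] t(2) unfolding \<epsilon>_def by (simp add: algebra_simps)
      ultimately show ?thesis using ev t(1) by simp
    qed
  qed
  then show ?thesis using ev[OF tau] by simp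
qed

lemma real_powser_identity:
  fixes h :: "real \<Rightarrow> real"
  assumes loc: "\<And>r0. \<exists>\<rho>>0. \<exists>a. \<forall>\<tau>. \<bar>\<tau>\<bar> < \<rho> \<longrightarrow> (\<lambda>n. a n * \<tau>^n) sums h (r0 + \<tau>)"
    and z: "\<exists>\<epsilon>>0. \<forall>r. \<bar>r\<bar> < \<epsilon> \<longrightarrow> h r = 0"
  shows "h r = 0"
proof -
  define Z where "Z = {r. \<exists>\<epsilon>>0. \<forall>s. \<bar>s - r\<bar> < \<epsilon> \<longrightarrow> h s = 0}"
  have oZ: "open Z" unfolding open_dist
  proof
    fix x assume "x \<in> Z"
    then obtain \<epsilon> where e: "\<epsilon> > 0" "\<And>s. \<bar>s - x\<bar> < \<epsilon> \<Longrightarrow> h s = 0" unfolding Z_def by blast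
    have "y \<in> Z" if "dist y x < \<epsilon>" for y
      unfolding Z_def using that e by (intro CollectI exI[of _ "\<epsilon> - dist y x"]) (auto simp: dist_real_def)
    then show "\<exists>e>0. \<forall>y. dist y x < e \<longrightarrow> y \<in> Z" using e(1) by blast
  qed
  have oZc: "open (- Z)" unfolding open_dist
  proof
    fix x assume "x \<in> - Z"
    obtain \<rho> a where ra: "\<rho> > 0" "\<And>\<tau>. \<bar>\<tau>\<bar> < \<rho> \<Longrightarrow> (\<lambda>n. a n * \<tau>^n) sums h (x + \<tau>)"
      using loc[of x] by blast
    have "y \<in> - Z" if "dist y x < \<rho>" for y
    proof
      assume "y \<in> Z"
      then obtain \<epsilon> where e: "\<epsilon> > 0" "\<And>s. \<bar>s - y\<bar> < \<epsilon> \<Longrightarrow> h s = 0" unfolding Z_def by blast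
      have "h s = 0" if "\<bar>s - x\<bar> < \<rho>" for s
        using powser_zero_near[OF ra(1) ra(2), of y \<epsilon> "s - x"] \<open>dist y x < \<rho>\<close> e that
        by (simp add: dist_real_def)
      then have "x \<in> Z" unfolding Z_def using ra(1) by blast
      then show False using \<open>x \<in> - Z\<close> by blast
    qed
    then show "\<exists>e>0. \<forall>y. dist y x < e \<longrightarrow> y \<in> - Z" using ra(1) by blast
  qed
  have "0 \<in> Z" using z unfolding Z_def by simp
  then have "- Z \<inter> UNIV = {}"
    using connectedD[OF connected_UNIV oZ oZc] by blast
  then have "r \<in> Z" by blast
  then obtain \<epsilon> where "\<epsilon> > 0" "\<And>s. \<bar>s - r\<bar> < \<epsilon> \<Longrightarrow> h s = 0" unfolding Z_def by blast
  then show ?thesis by simp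
qed




lemma line_series:
  fixes f :: "'a::euclidean_space \<Rightarrow> 'a" and \<phi> :: "'a \<Rightarrow> real"
  assumes an: "real_analytic_on f UNIV" and lin: "linear \<phi>"
  shows "\<exists>\<rho>>0. \<exists>a. \<forall>\<tau>. \<bar>\<tau>\<bar> < \<rho> \<longrightarrow> (\<lambda>n. a n * \<tau>^n) sums \<phi> (f (x0 + \<tau> *\<^sub>R z))"
proof -
  define D where "D = {\<alpha>::'a \<Rightarrow> nat. \<forall>i. i \<notin> Basis \<longrightarrow> \<alpha> i = 0}"
  obtain r c where rc: "r > 0" "\<And>y. y \<in> ball x0 r \<Longrightarrow>
      ((\<lambda>\<alpha>. (\<Prod>b\<in>Basis. ((y - x0) \<bullet> b) ^ \<alpha> b) *\<^sub>R c \<alpha>) has_sum f y) D"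
    using an unfolding real_analytic_on_def D_def by blast
  define deg where "deg \<alpha> = (\<Sum>b\<in>Basis. \<alpha> b)" for \<alpha> :: "'a \<Rightarrow> nat"
  define \<kappa> where "\<kappa> \<alpha> = (\<Prod>b\<in>Basis. (z \<bullet> b) ^ \<alpha> b) * \<phi> (c \<alpha>)" for \<alpha>
  define \<rho> where "\<rho> = r / (norm z + 1)"
  have rpos: "\<rho> > 0" unfolding \<rho>_def using rc(1) by (simp add: add_nonneg_pos)
  have bl: "bounded_linear \<phi>" using lin linear_conv_bounded_linear by blast
  have hs: "((\<lambda>\<alpha>. \<tau> ^ deg \<alpha> * \<kappa> \<alpha>) has_sum \<phi> (f (x0 + \<tau> *\<^sub>R z))) D" if t: "\<bar>\<tau>\<bar> < \<rho>" for \<tau>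
  proof -
    have "norm (\<tau> *\<^sub>R z) < r"
    proof -
      have "norm (\<tau> *\<^sub>R z) = \<bar>\<tau>\<bar> * norm z" by simp
      also have "\<dots> \<le> \<bar>\<tau>\<bar> * (norm z + 1)" by (simp add: mult_left_mono)
      also have "\<dots> < \<rho> * (norm z + 1)" using t by (intro mult_strict_right_mono) (auto simp: add_nonneg_pos)
      also have "\<dots> = r" unfolding \<rho>_def by (simp add: add_nonneg_pos less_imp_neq[symmetric])
      finally show ?thesis .
    qed
    then have "x0 + \<tau> *\<^sub>R z \<in> ball x0 r" by (simp add: dist_norm)
    from has_sum_bounded_linear[OF bl rc(2)[OF this]]
    have "((\<lambda>\<alpha>. \<phi> ((\<Prod>b\<in>Basis. ((x0 + \<tau> *\<^sub>R z - x0) \<bullet> b) ^ \<alpha> b) *\<^sub>R c \<alpha>)) has_sum \<phi> (f (x0 + \<tau> *\<^sub>R z))) D" .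
    moreover have "\<phi> ((\<Prod>b\<in>Basis. ((x0 + \<tau> *\<^sub>R z - x0) \<bullet> b) ^ \<alpha> b) *\<^sub>R c \<alpha>) = \<tau> ^ deg \<alpha> * \<kappa> \<alpha>" for \<alpha>
    proof -
      have "(\<Prod>b\<in>Basis. ((x0 + \<tau> *\<^sub>R z - x0) \<bullet> b) ^ \<alpha> b) = (\<Prod>b\<in>Basis. \<tau> ^ \<alpha> b * (z \<bullet> b) ^ \<alpha> b)"
        by (simp add: power_mult_distrib)
      also have "\<dots> = \<tau> ^ deg \<alpha> * (\<Prod>b\<in>Basis. (z \<bullet> b) ^ \<alpha> b)"
        by (simp add: prod.distrib deg_def power_sum)
      finally show ?thesis unfolding \<kappa>_def using linear_scale[OF lin] by simp
    qed
    ultimately show ?thesis by (simp only:)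
  qed
  define Dn where "Dn n = {\<alpha>\<in>D. deg \<alpha> = n}" for n
  define t1 where "t1 = \<rho> / 2"
  have t1: "\<bar>t1\<bar> < \<rho>" "t1 \<noteq> 0" unfolding t1_def using rpos by auto
  have sumDn: "\<kappa> summable_on Dn n" for n
  proof -
    have "(\<lambda>\<alpha>. t1 ^ deg \<alpha> * \<kappa> \<alpha>) summable_on Dn n"
    proof (rule summable_on_subset_banach)
      show "(\<lambda>\<alpha>. t1 ^ deg \<alpha> * \<kappa> \<alpha>) summable_on D" using hs[OF t1(1)] by (rule has_sum_imp_summable)
      show "Dn n \<subseteq> D" unfolding Dn_def by auto
    qed
    then have "(\<lambda>\<alpha>. t1 ^ n * \<kappa> \<alpha>) summable_on Dn n"
      by (rule summable_on_cong[THEN iffD1, rotated]) (simp add: Dn_def)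
    moreover have "t1 ^ n \<noteq> 0" using t1(2) by simp
    ultimately show ?thesis using summable_on_cmult_right'[of "t1 ^ n" \<kappa> "Dn n"] by blast
  qed
  define a where "a n = infsum \<kappa> (Dn n)" for n
  have "(\<lambda>n. a n * \<tau>^n) sums \<phi> (f (x0 + \<tau> *\<^sub>R z))" if t: "\<bar>\<tau>\<bar> < \<rho>" for \<tau>
  proof -
    define G where "G = (\<lambda>(n::nat, \<alpha>). \<tau> ^ n * \<kappa> \<alpha>)"
    have inj: "inj_on (\<lambda>\<alpha>. (deg \<alpha>, \<alpha>)) D" by (auto intro: inj_onI)
    have img: "(\<lambda>\<alpha>. (deg \<alpha>, \<alpha>)) ` D = Sigma UNIV Dn" unfolding Dn_def by auto
    have "((G \<circ> (\<lambda>\<alpha>. (deg \<alpha>, \<alpha>))) has_sum \<phi> (f (x0 + \<tau> *\<^sub>R z))) D"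
      using hs[OF t] by (simp add: G_def o_def)
    then have "(G has_sum \<phi> (f (x0 + \<tau> *\<^sub>R z))) (Sigma UNIV Dn)"
      using has_sum_reindex[OF inj] img by metis
    then have "((\<lambda>n. \<tau> ^ n * a n) has_sum \<phi> (f (x0 + \<tau> *\<^sub>R z))) UNIV"
    proof (rule has_sum_Sigma')
      fix n :: nat
      show "((\<lambda>y. G (n, y)) has_sum \<tau> ^ n * a n) (Dn n)"
        unfolding G_def a_def using has_sum_cmult_right[OF has_sum_infsum[OF sumDn]] by simp
    qed
    then show ?thesis by (simp add: mult.commute has_sum_imp_sums)
  qed
  then show ?thesis using rpos by blast
qed




lemma K1:
  assumes ne: "nonexpansive N f" and a: "a \<in> S_set E f" and sub: "E \<subseteq> duality_map N (b - a)"
    and ph: "\<phi> \<in> E"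
  shows "\<phi> (f b) \<le> \<phi> b"
proof -
  have pd: "\<phi> \<in> dual_ball N" "\<phi> (b - a) = N (b - a)" using sub ph unfolding duality_map_def by auto
  have l: "linear \<phi>" using dbD(1)[OF pd(1)] .
  have "\<phi> (f b - f a) \<le> N (f b - f a)" using dbD(2)[OF pd(1)] .
  also have "\<dots> \<le> N (b - a)" using ne unfolding nonexpansive_def by blast
  finally have "\<phi> (f b) - \<phi> (f a) \<le> \<phi> b - \<phi> a" using pd(2) linear_diff[OF l] by simp
  moreover have "\<phi> (f a) = \<phi> a" using a ph unfolding S_set_def by blast
  ultimately show ?thesis by simp
qed

lemma K2:
  assumes ne: "nonexpansive N f" and a: "a \<in> S_set E f" and sub: "E \<subseteq> duality_map N (a - b)"
    and ph: "\<phi> \<in> E"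
  shows "\<phi> (f b) \<ge> \<phi> b"
proof -
  have pd: "\<phi> \<in> dual_ball N" "\<phi> (a - b) = N (a - b)" using sub ph unfolding duality_map_def by auto
  have l: "linear \<phi>" using dbD(1)[OF pd(1)] .
  have "\<phi> (f a - f b) \<le> N (f a - f b)" using dbD(2)[OF pd(1)] .
  also have "\<dots> \<le> N (a - b)" using ne unfolding nonexpansive_def by blast
  finally have "\<phi> (f a) - \<phi> (f b) \<le> \<phi> a - \<phi> b" using pd(2) linear_diff[OF l] by simp
  moreover have "\<phi> (f a) = \<phi> a" using a ph unfolding S_set_def by blast
  ultimately show ?thesis by simp
qed

lemma affine_series:
  fixes \<phi> :: "'a::euclidean_space \<Rightarrow> real"
  assumes "linear \<phi>"
  shows "(\<lambda>n. (if n = 0 then \<phi> x0 else if n = 1 then \<phi> z else 0) * \<tau>^n) sums \<phi> (x0 + \<tau> *\<^sub>R z)"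
proof -
  have "(\<lambda>n. (if n = 0 then \<phi> x0 else if n = 1 then \<phi> z else 0) * \<tau>^n) sums
      (\<Sum>n\<in>{0,1}. (if n = 0 then \<phi> x0 else if n = 1 then \<phi> z else 0) * \<tau>^n)"
    by (rule sums_finite) auto
  moreover have "(\<Sum>n\<in>{0::nat,1}. (if n = 0 then \<phi> x0 else if n = 1 then \<phi> z else 0) * \<tau>^n) = \<phi> (x0 + \<tau> *\<^sub>R z)"
    using linear_add[OF assms] linear_scale[OF assms] by simp
  ultimately show ?thesis by simp
qed

lemma identity_line:
  fixes f :: "'a::euclidean_space \<Rightarrow> 'a" and \<phi> :: "'a \<Rightarrow> real"
  assumes an: "real_analytic_on f UNIV" and lin: "linear \<phi>"
    and z: "\<exists>\<epsilon>>0. \<forall>r. \<bar>r\<bar> < \<epsilon> \<longrightarrow> \<phi> (f (p0 + r *\<^sub>R z)) = \<phi> (p0 + r *\<^sub>R z)"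
  shows "\<phi> (f (p0 + z)) = \<phi> (p0 + z)"
proof -
  define h where "h r = \<phi> (f (p0 + r *\<^sub>R z)) - \<phi> (p0 + r *\<^sub>R z)" for r
  have "h 1 = 0"
  proof (rule real_powser_identity[where h = h])
    fix r0
    obtain \<rho> a where ra0: "\<rho> > 0" "\<forall>\<tau>. \<bar>\<tau>\<bar> < \<rho> \<longrightarrow> (\<lambda>n. a n * \<tau>^n) sums \<phi> (f ((p0 + r0 *\<^sub>R z) + \<tau> *\<^sub>R z))"
      using line_series[OF an lin, of "p0 + r0 *\<^sub>R z" z] by (elim exE conjE) (rule that)
    have ra: "\<rho> > 0" "\<And>\<tau>. \<bar>\<tau>\<bar> < \<rho> \<Longrightarrow> (\<lambda>n. a n * \<tau>^n) sums \<phi> (f ((p0 + r0 *\<^sub>R z) + \<tau> *\<^sub>R z))"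
      using ra0 by auto
    define b where "b n = (if n = 0 then \<phi> (p0 + r0 *\<^sub>R z) else if n = 1 then \<phi> z else 0)" for n :: nat
    have "(\<lambda>n. (a n - b n) * \<tau>^n) sums h (r0 + \<tau>)" if "\<bar>\<tau>\<bar> < \<rho>" for \<tau>
    proof -
      have e: "p0 + (r0 + \<tau>) *\<^sub>R z = (p0 + r0 *\<^sub>R z) + \<tau> *\<^sub>R z" by (simp add: scaleR_add_left)
      have "(\<lambda>n. a n * \<tau>^n - b n * \<tau>^n) sums (\<phi> (f ((p0 + r0 *\<^sub>R z) + \<tau> *\<^sub>R z)) - \<phi> ((p0 + r0 *\<^sub>R z) + \<tau> *\<^sub>R z))"
        using sums_diff[OF ra(2)[OF that] affine_series[OF lin, of "p0 + r0 *\<^sub>R z" z \<tau>]] unfolding b_def .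
      moreover have "(\<lambda>n. (a n - b n) * \<tau>^n) = (\<lambda>n. a n * \<tau>^n - b n * \<tau>^n)"
        by (rule ext) (rule left_diff_distrib)
      moreover have "h (r0 + \<tau>) = \<phi> (f ((p0 + r0 *\<^sub>R z) + \<tau> *\<^sub>R z)) - \<phi> ((p0 + r0 *\<^sub>R z) + \<tau> *\<^sub>R z)"
        unfolding h_def e ..
      ultimately show ?thesis by (simp only:)
    qed
    then show "\<exists>\<rho>>0. \<exists>a. \<forall>\<tau>. \<bar>\<tau>\<bar> < \<rho> \<longrightarrow> (\<lambda>n. a n * \<tau>^n) sums h (r0 + \<tau>)"
      using ra(1) by (intro exI[of _ \<rho>] conjI exI[of _ "\<lambda>n. a n - b n"]) auto
  next
    show "\<exists>\<epsilon>>0. \<forall>r. \<bar>r\<bar> < \<epsilon> \<longrightarrow> h r = 0" using z unfolding h_def by simp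
  qed
  then show ?thesis unfolding h_def by simp
qed




theorem lemma2p5:
  fixes N :: "'a::euclidean_space \<Rightarrow> real" and f :: "'a \<Rightarrow> 'a"
    and E :: "('a \<Rightarrow> real) set"
  assumes "polyhedral_norm N"
    and "nonexpansive N f"
    and "real_analytic_on f UNIV"
    and "minimal_locked N f E"
  shows "\<forall>x\<in>S_set E f. S_set E f = (\<lambda>y. x + y) ` L_set E"
proof -
  obtain \<Psi> where P: "finite \<Psi>" "\<Psi> \<noteq> {}" "\<Psi> \<subseteq> dual_ball N" "\<forall>x. \<exists>\<psi>\<in>\<Psi>. \<psi> x = N x"
    using poly_rep[OF assms(1)] by blast
  have nN: "is_norm N" using assms(1) unfolding polyhedral_norm_def by blast
  interpret polyN N \<Psi> using P nN by unfold_locales auto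
  note ne = assms(2)
  obtain v w where vw: "v \<in> S_set E f" "w \<in> S_set E f" "duality_map N (v - w) = E"
    and Esub: "E \<subseteq> dual_ball N"
    using assms(4) unfolding minimal_locked_def locked_def by blast
  have minl: "\<And>E'. E' \<subset> E \<Longrightarrow> \<not> locked N f E'" using assms(4) unfolding minimal_locked_def by blast
  define u where "u = v - w"
  have Eu: "E = duality_map N u" using vw(3) u_def by simp
  have uL: "u \<in> L_set E" unfolding L_set_def Eu duality_map_def by simp
  obtain \<delta> where d0: "\<delta> > 0" "\<And>h a. h \<in> L_set (duality_map N u) \<Longrightarrow> a > 0 \<Longrightarrow> norm h < a * \<delta>
     \<Longrightarrow> duality_map N u \<subseteq> duality_map N (a *\<^sub>R u + h)"
    by (rule local_flat_scaled[of u]) blast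
  note d = d0[folded Eu]
  have seg: "w + a *\<^sub>R u + h \<in> S_set E f"
    if h: "h \<in> L_set E" "0 < a" "a < 1" "norm h < a * \<delta>" "norm h < (1 - a) * \<delta>" for h a
  proof -
    have s1: "E \<subseteq> duality_map N ((w + a *\<^sub>R u + h) - w)" using d(2)[OF h(1,2,4)] by (simp add: algebra_simps)
    have mh: "- h \<in> L_set E" using L_scale[OF Esub h(1), of "-1"] by simp
    have s2: "E \<subseteq> duality_map N (v - (w + a *\<^sub>R u + h))"
    proof -
      have eq: "v - (w + a *\<^sub>R u + h) = (1 - a) *\<^sub>R u + - h" unfolding u_def by (simp add: algebra_simps)
      show ?thesis unfolding eq by (rule d(2)[OF mh]) (use h in auto)
    qed
    show ?thesis unfolding S_set_def
    proof (intro CollectI ballI antisym)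
      fix \<phi> assume "\<phi> \<in> E"
      show "\<phi> (f (w + a *\<^sub>R u + h)) \<le> \<phi> (w + a *\<^sub>R u + h)" by (rule K1[OF ne vw(2) s1 \<open>\<phi> \<in> E\<close>])
      show "\<phi> (w + a *\<^sub>R u + h) \<le> \<phi> (f (w + a *\<^sub>R u + h))" by (rule K2[OF ne vw(1) s2 \<open>\<phi> \<in> E\<close>])
    qed
  qed
  define p0 where "p0 = w + (1/2) *\<^sub>R u"
  have stepA0: "p0 + z \<in> S_set E f" if zL: "z \<in> L_set E" for z
    unfolding S_set_def
  proof (intro CollectI ballI)
    fix \<phi> assume ph: "\<phi> \<in> E"
    have lin: "linear \<phi>" using Esub ph dbD(1) by blast
    show "\<phi> (f (p0 + z)) = \<phi> (p0 + z)"
    proof (rule identity_line[OF assms(3) lin])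
      define \<epsilon> where "\<epsilon> = \<delta> / (2 * (norm z + 1))"
      have ep: "\<epsilon> > 0" unfolding \<epsilon>_def using d(1) by (simp add: add_nonneg_pos)
      have "\<phi> (f (p0 + r *\<^sub>R z)) = \<phi> (p0 + r *\<^sub>R z)" if r: "\<bar>r\<bar> < \<epsilon>" for r
      proof -
        have rL: "r *\<^sub>R z \<in> L_set E" by (rule L_scale[OF Esub zL])
        have "norm (r *\<^sub>R z) < (1/2) * \<delta>"
        proof -
          have "norm (r *\<^sub>R z) = \<bar>r\<bar> * norm z" by simp
          also have "\<dots> \<le> \<bar>r\<bar> * (norm z + 1)" by (simp add: mult_left_mono)
          also have "\<dots> < \<epsilon> * (norm z + 1)" using r by (intro mult_strict_right_mono) (auto simp: add_nonneg_pos)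
          also have "\<dots> = (1/2) * \<delta>"
          proof -
            have "norm z + 1 \<noteq> 0" using norm_ge_zero[of z] by linarith
            then show ?thesis unfolding \<epsilon>_def by (simp add: field_simps)
          qed
          finally show ?thesis .
        qed
        then have "w + (1/2) *\<^sub>R u + r *\<^sub>R z \<in> S_set E f" using seg[OF rL] by simp
        then show ?thesis using ph unfolding S_set_def p0_def by blast
      qed
      then show "\<exists>\<epsilon>>0. \<forall>r. \<bar>r\<bar> < \<epsilon> \<longrightarrow> \<phi> (f (p0 + r *\<^sub>R z)) = \<phi> (p0 + r *\<^sub>R z)" using ep by blast
    qed
  qed
  have stepA: "w + y \<in> S_set E f" if yL: "y \<in> L_set E" for y
  proof -
    have "y - (1/2) *\<^sub>R u \<in> L_set E" using L_diff[OF Esub yL L_scale[OF Esub uL]] .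
    then have "p0 + (y - (1/2) *\<^sub>R u) \<in> S_set E f" by (rule stepA0)
    then show ?thesis unfolding p0_def by (simp add: algebra_simps)
  qed
  have stepB: "w - x \<in> L_set E" if xS: "x \<in> S_set E f" for x
  proof (rule ccontr)
    assume nL: "w - x \<notin> L_set E"
    obtain t where t: "duality_map N (t *\<^sub>R u + (w - x)) \<subseteq> E"
      "duality_map N (t *\<^sub>R u + (w - x)) \<noteq> E"
      using far[of u "w - x"] nL unfolding Eu by blast
    define E' where "E' = duality_map N (t *\<^sub>R u + (w - x))"
    have SS: "S_set E f \<subseteq> S_set E' f" using t(1) unfolding E'_def S_set_def by blast
    have wS: "w + t *\<^sub>R u \<in> S_set E f" using stepA[OF L_scale[OF Esub uL]] .
    have eqv: "(w + t *\<^sub>R u) - x = t *\<^sub>R u + (w - x)" by (simp add: algebra_simps)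
    have "locked N f E'"
    proof -
      have 1: "E' \<subseteq> dual_ball N" unfolding E'_def by (rule J_sub)
      have 2: "w + t *\<^sub>R u \<in> S_set E' f" using SS wS by blast
      have 3: "x \<in> S_set E' f" using SS xS by blast
      have 4: "duality_map N (w + t *\<^sub>R u - x) = E'" unfolding E'_def eqv ..
      show ?thesis unfolding locked_def using 1 2 3 4 by blast
    qed
    moreover have "E' \<subset> E" using t unfolding E'_def by blast
    ultimately show False using minl by blast
  qed
  show ?thesis
  proof
    fix x assume xS: "x \<in> S_set E f"
    have d0: "x - w \<in> L_set E" using L_scale[OF Esub stepB[OF xS], of "-1"] by simp
    show "S_set E f = (\<lambda>y. x + y) ` L_set E"
    proof
      show "S_set E f \<subseteq> (\<lambda>y. x + y) ` L_set E"
      proof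
        fix y assume yS: "y \<in> S_set E f"
        have "y - w \<in> L_set E" using L_scale[OF Esub stepB[OF yS], of "-1"] by simp
        then have "(y - w) - (x - w) \<in> L_set E" using L_diff[OF Esub _ d0] by blast
        then show "y \<in> (\<lambda>y. x + y) ` L_set E" by (intro image_eqI[of _ _ "(y - w) - (x - w)"]) auto
      qed
      show "(\<lambda>y. x + y) ` L_set E \<subseteq> S_set E f"
      proof
        fix y assume "y \<in> (\<lambda>y. x + y) ` L_set E"
        then obtain l where l: "l \<in> L_set E" "y = x + l" by blast
        have "(x - w) + l \<in> L_set E" using L_add[OF Esub d0 l(1)] .
        then have "w + ((x - w) + l) \<in> S_set E f" by (rule stepA)
        then show "y \<in> S_set E f" using l(2) by (simp add: algebra_simps)
      qed
    qed
  qed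
qed


end
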